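(* Let $G$ be a discrete abelian group (written additively), $\alpha\in\mathcal C_c(G,\mathbf k)$, and consider the convolution equation $\sigma(s)=\alpha\star s$, i.e. $s_g^{(t+1)}=\sum_{h\in G}\alpha_h^{(t)}s_{g-h}^{(t)}$. Let ${\rm Sol}_c(\alpha,L^c)$ be the complex vector space of its solutions $s\in\mathcal C(G,{\rm Seq}(\mathbf C))$ such that each $s^{(t)}$ has finite support. Then the Fourier transform $\mathcal F(s)=\sum_{g\in G}s_g\,e^{ig\theta}$ is an isomorphism of $G$-modules from ${\rm Sol}_c(\alpha,L^c)$ onto $$\Big(\prod_{\tau=0}^{t-1}\hat\alpha_\theta^{(\tau)}\Big)\cdot\mathbf C[e^{ig\theta}: g\in G]\subset{\rm Seq}(\mathbf C)[e^{ig\theta}:g\in G],$$ i.e. onto the set of products of the fixed sequence-valued Fourier polynomial $t\mapsto\prod_{\tau=0}^{t-1}\hat\alpha^{(\tau)}_\theta$ with complex Fourier polynomials.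
   Context: ${\rm Seq}(\mathbf C)$ is the ring of complex sequences indexed by $t\in\mathbf Z_{\ge0}$ with shift $\sigma(x)^{(t)}=x^{(t+1)}$; $\mathbf k\subseteq{\rm Seq}(\mathbf C)$ is a $\sigma$-stable subring with constants $\mathbf C$. $\mathcal C_c(G,\mathbf k)$ denotes finitely supported functions $G\to\mathbf k$. For $g\in G$, $e^{ig\theta}$ denotes the function on the dual group $\widehat G={\rm Hom}(G,\mathbf S^1)$ given by $\rho\mapsto\rho(g)$; for a ring $R$, $R[e^{ig\theta}:g\in G]$ is the ring of finite sums $\sum c_g e^{ig\theta}$, $c_g\in R$, with $e^{ig\theta}e^{ih\theta}=e^{i(g+h)\theta}$ (Fourier polynomials). $\hat\alpha^{(\tau)}_\theta=\sum_g\alpha^{(\tau)}_g e^{ig\theta}$. $G$ acts on functions by $(s\star h)_g=s_{g-h}$ and on Fourier polynomials by $e^{ig\theta}\star h=e^{i(g+h)\theta}$. $L^c$ is the smallest $\sigma$-subring of ${\rm Seq}(\mathbf C)$ containing $\mathbf k$ and all values of finite-support solutions. *)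

theory Defs
  imports Complex_Main
begin

type_synonym cseq = "nat \<Rightarrow> complex"

definition shift :: "cseq \<Rightarrow> cseq" where
  "shift x = (\<lambda>t. x (Suc t))"

definition sigma_subring :: "cseq set \<Rightarrow> bool" where
  "sigma_subring R \<longleftrightarrow>
     (\<lambda>_. 0) \<in> R \<and> (\<lambda>_. 1) \<in> R \<and>
     (\<forall>x\<in>R. \<forall>y\<in>R. (\<lambda>t. x t + y t) \<in> R \<and> (\<lambda>t. x t - y t) \<in> R \<and> (\<lambda>t. x t * y t) \<in> R) \<and>
     (\<forall>x\<in>R. shift x \<in> R)"

definition base_field_ok :: "cseq set \<Rightarrow> bool" where
  "base_field_ok k \<longleftrightarrow> sigma_subring k \<and> {x \<in> k. shift x = x} = range (\<lambda>c::complex. (\<lambda>_. c))"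

definition fin_supp :: "('g \<Rightarrow> 'r::zero) \<Rightarrow> bool" where
  "fin_supp f \<longleftrightarrow> finite {g. f g \<noteq> 0}"

text \<open>Fourier polynomials: an element \<Sum> c_g e^{ig\<theta>} is represented by its finitely supported
  coefficient function g \<mapsto> c_g; multiplication is the group-ring (convolution) product,
  encoding e^{ig\<theta>} e^{ih\<theta>} = e^{i(g+h)\<theta>}.\<close>
definition fconv :: "('g::ab_group_add \<Rightarrow> complex) \<Rightarrow> ('g \<Rightarrow> complex) \<Rightarrow> ('g \<Rightarrow> complex)" where
  "fconv a b = (\<lambda>g. \<Sum>h\<in>{h. a h \<noteq> 0}. a h * b (g - h))"

definition fone :: "'g::ab_group_add \<Rightarrow> complex" where
  "fone = (\<lambda>g. if g = 0 then 1 else 0)"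

definition alpha_hat :: "('g \<Rightarrow> cseq) \<Rightarrow> nat \<Rightarrow> ('g \<Rightarrow> complex)" where
  "alpha_hat \<alpha> \<tau> = (\<lambda>g. \<alpha> g \<tau>)"

primrec alpha_prod :: "('g::ab_group_add \<Rightarrow> cseq) \<Rightarrow> nat \<Rightarrow> ('g \<Rightarrow> complex)" where
  "alpha_prod \<alpha> 0 = fone"
| "alpha_prod \<alpha> (Suc t) = fconv (alpha_prod \<alpha> t) (alpha_hat \<alpha> t)"

definition is_sol :: "('g::ab_group_add \<Rightarrow> cseq) \<Rightarrow> ('g \<Rightarrow> cseq) \<Rightarrow> bool" where
  "is_sol \<alpha> s \<longleftrightarrow>
     (\<forall>g t. s g (Suc t) = (\<Sum>h\<in>{h. \<alpha> h \<noteq> (\<lambda>_. 0)}. \<alpha> h t * s (g - h) t))"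

definition fin_sols :: "('g::ab_group_add \<Rightarrow> cseq) \<Rightarrow> ('g \<Rightarrow> cseq) set" where
  "fin_sols \<alpha> = {s. is_sol \<alpha> s \<and> (\<forall>t. fin_supp (\<lambda>g. s g t))}"

definition Lc :: "cseq set \<Rightarrow> ('g::ab_group_add \<Rightarrow> cseq) \<Rightarrow> cseq set" where
  "Lc k \<alpha> = \<Inter> {R. sigma_subring R \<and> k \<subseteq> R \<and> (\<forall>s\<in>fin_sols \<alpha>. \<forall>g. s g \<in> R)}"

definition Sol_c :: "('g::ab_group_add \<Rightarrow> cseq) \<Rightarrow> cseq set \<Rightarrow> ('g \<Rightarrow> cseq) set" where
  "Sol_c \<alpha> L = {s \<in> fin_sols \<alpha>. \<forall>g. s g \<in> L}"

text \<open>Fourier transform: F(s) = \<Sum>_g s_g e^{ig\<theta>}, as the sequence (in t) of Fourier polynomials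
  whose coefficient of e^{ig\<theta>} at time t is s_g^{(t)}.\<close>
definition fourier :: "('g \<Rightarrow> cseq) \<Rightarrow> nat \<Rightarrow> ('g \<Rightarrow> complex)" where
  "fourier s = (\<lambda>t g. s g t)"

text \<open>G-actions: (s \<star> h)_g = s_{g-h};  (e^{ig\<theta>} \<star> h) = e^{i(g+h)\<theta>}, i.e. coefficients shift.\<close>
definition act_fun :: "('g::ab_group_add \<Rightarrow> 'a) \<Rightarrow> 'g \<Rightarrow> ('g \<Rightarrow> 'a)" where
  "act_fun s h = (\<lambda>g. s (g - h))"

definition act_fourier :: "(nat \<Rightarrow> 'g::ab_group_add \<Rightarrow> complex) \<Rightarrow> 'g \<Rightarrow> (nat \<Rightarrow> 'g \<Rightarrow> complex)" where
  "act_fourier P h = (\<lambda>t. act_fun (P t) h)"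

definition target :: "('g::ab_group_add \<Rightarrow> cseq) \<Rightarrow> (nat \<Rightarrow> 'g \<Rightarrow> complex) set" where
  "target \<alpha> = {(\<lambda>t. fconv (alpha_prod \<alpha> t) p) | p. fin_supp p}"

end

theory Submission
  imports Defs
begin

lemma fconv_eq:
  assumes "finite S" "{h. a h \<noteq> 0} \<subseteq> S"
  shows "fconv a b g = (\<Sum>h\<in>S. a h * b (g - h))"
  unfolding fconv_def
  by (rule sum.mono_neutral_left) (use assms in auto)

lemma fconv_nz:
  assumes "fconv a b z \<noteq> 0" shows "\<exists>x. a x \<noteq> 0 \<and> b (z - x) \<noteq> 0"
proof (rule ccontr)
  assume "\<not> ?thesis"
  then have "\<forall>x\<in>{h. a h \<noteq> 0}. a x * b (z - x) = 0" by auto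
  then have "fconv a b z = 0" unfolding fconv_def by (rule sum.neutral)
  with assms show False by simp
qed

lemma fin_supp_fconv:
  assumes "fin_supp a" "fin_supp b"
  shows "fin_supp (fconv a b)"
proof -
  let ?Sa = "{h. a h \<noteq> 0}" and ?Sb = "{h. b h \<noteq> 0}"
  let ?S = "(\<lambda>(x,y). x + y) ` (?Sa \<times> ?Sb)"
  have fin: "finite ?S" using assms unfolding fin_supp_def by auto
  have "{z. fconv a b z \<noteq> 0} \<subseteq> ?S"
  proof
    fix z assume "z \<in> {z. fconv a b z \<noteq> 0}"
    then obtain x where "a x \<noteq> 0" "b (z - x) \<noteq> 0"
      using fconv_nz by blast
    then have "(x, z - x) \<in> ?Sa \<times> ?Sb" by auto
    then show "z \<in> ?S" by (rule image_eqI[rotated]) simp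
  qed
  then show ?thesis unfolding fin_supp_def using fin finite_subset by blast
qed

lemma fconv_assoc:
  assumes "fin_supp a" "fin_supp b"
  shows "fconv (fconv a b) c = fconv a (fconv b c)"
proof
  fix g
  let ?Sa = "{h. a h \<noteq> 0}" and ?Sb = "{h. b h \<noteq> 0}"
  let ?S = "(\<lambda>(x,y). x + y) ` (?Sa \<times> ?Sb)"
  have fa: "finite ?Sa" and fb: "finite ?Sb" using assms unfolding fin_supp_def by auto
  have fin: "finite ?S" using fa fb by auto
  have sub: "{z. fconv a b z \<noteq> 0} \<subseteq> ?S"
  proof
    fix z assume "z \<in> {z. fconv a b z \<noteq> 0}"
    then obtain x where "a x \<noteq> 0" "b (z - x) \<noteq> 0"
      using fconv_nz by blast
    then have "(x, z - x) \<in> ?Sa \<times> ?Sb" by auto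
    then show "z \<in> ?S" by (rule image_eqI[rotated]) simp
  qed
  have inner: "(\<Sum>z\<in>?S. b (z - x) * c (g - z)) = (\<Sum>y\<in>?Sb. b y * c (g - x - y))"
    if x: "x \<in> ?Sa" for x
  proof -
    have "(\<Sum>z\<in>?S. b (z - x) * c (g - z)) = (\<Sum>z\<in>(\<lambda>y. y + x) ` ?Sb. b (z - x) * c (g - z))"
    proof (rule sum.mono_neutral_right)
      show "finite ?S" by fact
      show "(\<lambda>y. y + x) ` ?Sb \<subseteq> ?S"
      proof
        fix z assume "z \<in> (\<lambda>y. y + x) ` ?Sb"
        then obtain y where y: "y \<in> ?Sb" "z = y + x" by blast
        have "(x, y) \<in> ?Sa \<times> ?Sb" using x y by simp
        then show "z \<in> ?S" by (rule image_eqI[rotated]) (simp add: y add.commute)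
      qed
      show "\<forall>i\<in>?S - (\<lambda>y. y + x) ` ?Sb. b (i - x) * c (g - i) = 0"
      proof
        fix i assume "i \<in> ?S - (\<lambda>y. y + x) ` ?Sb"
        then have "i \<notin> (\<lambda>y. y + x) ` ?Sb" by blast
        then have "i - x \<notin> ?Sb" by (metis diff_add_cancel image_eqI)
        then show "b (i - x) * c (g - i) = 0" by simp
      qed
    qed
    also have "\<dots> = (\<Sum>y\<in>?Sb. b y * c (g - x - y))"
      by (subst sum.reindex) (auto simp: inj_on_def algebra_simps)
    finally show ?thesis .
  qed
  have "fconv (fconv a b) c g = (\<Sum>z\<in>?S. fconv a b z * c (g - z))"
    by (rule fconv_eq[OF fin sub])
  also have "\<dots> = (\<Sum>z\<in>?S. \<Sum>x\<in>?Sa. a x * (b (z - x) * c (g - z)))"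
    unfolding fconv_def by (simp add: sum_distrib_right mult.assoc)
  also have "\<dots> = (\<Sum>x\<in>?Sa. a x * (\<Sum>z\<in>?S. b (z - x) * c (g - z)))"
    by (subst sum.swap) (simp add: sum_distrib_left)
  also have "\<dots> = (\<Sum>x\<in>?Sa. a x * (\<Sum>y\<in>?Sb. b y * c (g - x - y)))"
    using inner by (intro sum.cong) auto
  also have "\<dots> = fconv a (fconv b c) g"
    unfolding fconv_def by simp
  finally show "fconv (fconv a b) c g = fconv a (fconv b c) g" .
qed

lemma fconv_comm:
  assumes "fin_supp a" "fin_supp b"
  shows "fconv a b = fconv b a"
proof
  fix g
  let ?Sa = "{h. a h \<noteq> 0}" and ?Sb = "{h. b h \<noteq> 0}"
  have fa: "finite ?Sa" and fb: "finite ?Sb" using assms unfolding fin_supp_def by auto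
  let ?T = "(\<lambda>h. g - h) ` ?Sa \<union> ?Sb"
  have "fconv a b g = (\<Sum>h\<in>?Sa. a h * b (g - h))" unfolding fconv_def ..
  also have "\<dots> = (\<Sum>k\<in>(\<lambda>h. g - h) ` ?Sa. a (g - k) * b k)"
    by (subst sum.reindex) (auto simp: inj_on_def)
  also have "\<dots> = (\<Sum>k\<in>?T. a (g - k) * b k)"
  proof (rule sum.mono_neutral_left)
    show "finite ?T" using fa fb by auto
    show "(\<lambda>h. g - h) ` ?Sa \<subseteq> ?T" by auto
    show "\<forall>i\<in>?T - (\<lambda>h. g - h) ` ?Sa. a (g - i) * b i = 0"
    proof
      fix i assume i: "i \<in> ?T - (\<lambda>h. g - h) ` ?Sa"
      have "a (g - i) = 0"
      proof (rule ccontr)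
        assume "a (g - i) \<noteq> 0"
        then have "g - (g - i) \<in> (\<lambda>h. g - h) ` ?Sa" by (intro imageI) simp
        with i show False by simp
      qed
      then show "a (g - i) * b i = 0" by simp
    qed
  qed
  also have "\<dots> = (\<Sum>k\<in>?Sb. b k * a (g - k))"
  proof (rule sum.mono_neutral_cong_right)
    show "finite ?T" using fa fb by auto
    show "?Sb \<subseteq> ?T" by auto
    show "\<forall>i\<in>?T - ?Sb. a (g - i) * b i = 0" by auto
    show "\<And>x. x \<in> ?Sb \<Longrightarrow> a (g - x) * b x = b x * a (g - x)" by simp
  qed
  also have "\<dots> = fconv b a g" unfolding fconv_def ..
  finally show "fconv a b g = fconv b a g" .
qed

lemma fconv_fone: "fconv fone p = p"
proof
  fix g
  have "{h. (fone::'a \<Rightarrow> complex) h \<noteq> 0} = {0::'a::ab_group_add}" by (auto simp: fone_def)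
  then show "fconv fone p g = p g" unfolding fconv_def by (simp add: fone_def)
qed

lemma fin_supp_fone: "fin_supp fone"
  unfolding fin_supp_def fone_def by simp

lemma fin_supp_alpha_hat:
  assumes "finite {g. \<alpha> g \<noteq> (\<lambda>_. 0)}"
  shows "fin_supp (alpha_hat \<alpha> t)"
proof -
  have "{g. alpha_hat \<alpha> t g \<noteq> 0} \<subseteq> {g. \<alpha> g \<noteq> (\<lambda>_. 0)}"
    unfolding alpha_hat_def by auto
  then show ?thesis unfolding fin_supp_def using assms finite_subset by blast
qed

lemma fin_supp_alpha_prod:
  assumes "finite {g. \<alpha> g \<noteq> (\<lambda>_. 0)}"
  shows "fin_supp (alpha_prod \<alpha> t)"
  by (induction t) (auto intro: fin_supp_fconv fin_supp_alpha_hat[OF assms] simp: fin_supp_fone)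

lemma sol_step:
  assumes "finite {g. \<alpha> g \<noteq> (\<lambda>_. 0)}"
  shows "(\<Sum>h\<in>{h. \<alpha> h \<noteq> (\<lambda>_. 0)}. \<alpha> h t * q (g - h)) = fconv (alpha_hat \<alpha> t) q g"
proof -
  have "fconv (alpha_hat \<alpha> t) q g = (\<Sum>h\<in>{h. \<alpha> h \<noteq> (\<lambda>_. 0)}. alpha_hat \<alpha> t h * q (g - h))"
    by (rule fconv_eq) (use assms in \<open>auto simp: alpha_hat_def\<close>)
  then show ?thesis by (simp add: alpha_hat_def)
qed

lemma sol_fourier:
  assumes fin: "finite {g. \<alpha> g \<noteq> (\<lambda>_. 0)}" and s: "is_sol \<alpha> s"
  shows "fourier s t = fconv (alpha_prod \<alpha> t) (fourier s 0)"
proof (induction t)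
  case 0 then show ?case by (simp add: fconv_fone)
next
  case (Suc t)
  have "fourier s (Suc t) = fconv (alpha_hat \<alpha> t) (fourier s t)"
  proof
    fix g show "fourier s (Suc t) g = fconv (alpha_hat \<alpha> t) (fourier s t) g"
      using s sol_step[OF fin, of t "\<lambda>g. s g t" g] unfolding is_sol_def fourier_def by simp
  qed
  also have "\<dots> = fconv (alpha_hat \<alpha> t) (fconv (alpha_prod \<alpha> t) (fourier s 0))"
    using Suc by simp
  also have "\<dots> = fconv (fconv (alpha_hat \<alpha> t) (alpha_prod \<alpha> t)) (fourier s 0)"
    by (rule fconv_assoc[symmetric]) (auto intro: fin_supp_alpha_hat fin_supp_alpha_prod fin)
  also have "\<dots> = fconv (alpha_prod \<alpha> (Suc t)) (fourier s 0)"
    by (simp add: fconv_comm fin_supp_alpha_hat fin_supp_alpha_prod fin)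
  finally show ?case .
qed

lemma target_sol:
  assumes fin: "finite {g. \<alpha> g \<noteq> (\<lambda>_. 0)}" and p: "fin_supp p"
  shows "(\<lambda>g t. fconv (alpha_prod \<alpha> t) p g) \<in> fin_sols \<alpha>"
  unfolding fin_sols_def is_sol_def
proof (intro CollectI conjI allI)
  fix g t
  have "fconv (alpha_prod \<alpha> (Suc t)) p = fconv (fconv (alpha_hat \<alpha> t) (alpha_prod \<alpha> t)) p"
    by (simp add: fconv_comm fin_supp_alpha_hat fin_supp_alpha_prod fin)
  also have "\<dots> = fconv (alpha_hat \<alpha> t) (fconv (alpha_prod \<alpha> t) p)"
    by (rule fconv_assoc) (auto intro: fin_supp_alpha_hat fin_supp_alpha_prod fin)
  finally show "fconv (alpha_prod \<alpha> (Suc t)) p g =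
     (\<Sum>h\<in>{h. \<alpha> h \<noteq> (\<lambda>_. 0)}. \<alpha> h t * fconv (alpha_prod \<alpha> t) p (g - h))"
    by (simp add: sol_step[OF fin])
next
  fix t show "fin_supp (\<lambda>g. fconv (alpha_prod \<alpha> t) p g)"
    using fin_supp_fconv[OF fin_supp_alpha_prod[OF fin] p] by simp
qed

lemma Sol_c_eq: "Sol_c \<alpha> (Lc k \<alpha>) = fin_sols \<alpha>"
  unfolding Sol_c_def Lc_def by auto

lemma fconv_act: "fconv a (act_fun p h) = act_fun (fconv a p) h"
  unfolding fconv_def act_fun_def by (auto simp: algebra_simps)

lemma fin_supp_act: "fin_supp p \<Longrightarrow> fin_supp (act_fun p h)"
proof -
  assume "fin_supp p"
  moreover have "{g. act_fun p h g \<noteq> 0} = (\<lambda>x. x + h) ` {g. p g \<noteq> 0}"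
    unfolding act_fun_def by (auto simp: image_iff intro!: exI[of _ "_ - h"])
  ultimately show ?thesis unfolding fin_supp_def by simp
qed

theorem theorem2p6:
  fixes k :: "cseq set" and \<alpha> :: "'g::ab_group_add \<Rightarrow> cseq"
  assumes k: "base_field_ok k"
    and alpha_k: "\<forall>g. \<alpha> g \<in> k"
    and alpha_fin: "finite {g. \<alpha> g \<noteq> (\<lambda>_. 0)}"
  shows
    "(\<forall>s\<in>Sol_c \<alpha> (Lc k \<alpha>). \<forall>s'\<in>Sol_c \<alpha> (Lc k \<alpha>). \<forall>a b::complex.
        (\<lambda>g t. a * s g t + b * s' g t) \<in> Sol_c \<alpha> (Lc k \<alpha>) \<and>
        fourier (\<lambda>g t. a * s g t + b * s' g t) = (\<lambda>t g. a * fourier s t g + b * fourier s' t g))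
     \<and> (\<forall>s\<in>Sol_c \<alpha> (Lc k \<alpha>). \<forall>h. act_fun s h \<in> Sol_c \<alpha> (Lc k \<alpha>) \<and>
          fourier (act_fun s h) = act_fourier (fourier s) h)
     \<and> (\<forall>P\<in>target \<alpha>. \<forall>h. act_fourier P h \<in> target \<alpha>)
     \<and> bij_betw fourier (Sol_c \<alpha> (Lc k \<alpha>)) (target \<alpha>)"
proof (intro conjI)
  show "\<forall>s\<in>Sol_c \<alpha> (Lc k \<alpha>). \<forall>s'\<in>Sol_c \<alpha> (Lc k \<alpha>). \<forall>a b::complex.
        (\<lambda>g t. a * s g t + b * s' g t) \<in> Sol_c \<alpha> (Lc k \<alpha>) \<and>
        fourier (\<lambda>g t. a * s g t + b * s' g t) = (\<lambda>t g. a * fourier s t g + b * fourier s' t g)"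
  proof (intro ballI allI conjI)
    fix s s' a b
    assume s: "s \<in> Sol_c \<alpha> (Lc k \<alpha>)" and s': "s' \<in> Sol_c \<alpha> (Lc k \<alpha>)"
    show "fourier (\<lambda>g t. a * s g t + b * s' g t) = (\<lambda>t g. a * fourier s t g + b * fourier s' t g)"
      unfolding fourier_def by simp
    have fs: "\<And>t. finite {g. s g t \<noteq> 0}" "\<And>t. finite {g. s' g t \<noteq> 0}"
      using s s' unfolding Sol_c_eq fin_sols_def fin_supp_def by auto
    have "\<And>t. {g. a * s g t + b * s' g t \<noteq> 0} \<subseteq> {g. s g t \<noteq> 0} \<union> {g. s' g t \<noteq> 0}" by auto
    then have "\<And>t. fin_supp (\<lambda>g. a * s g t + b * s' g t)"
      unfolding fin_supp_def using fs by (meson finite_UnI finite_subset)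
    moreover have "is_sol \<alpha> (\<lambda>g t. a * s g t + b * s' g t)"
      unfolding is_sol_def
    proof (intro allI)
      fix g t
      have e1: "s g (Suc t) = (\<Sum>h\<in>{h. \<alpha> h \<noteq> (\<lambda>_. 0)}. \<alpha> h t * s (g - h) t)"
        using s unfolding Sol_c_eq fin_sols_def is_sol_def by blast
      have e2: "s' g (Suc t) = (\<Sum>h\<in>{h. \<alpha> h \<noteq> (\<lambda>_. 0)}. \<alpha> h t * s' (g - h) t)"
        using s' unfolding Sol_c_eq fin_sols_def is_sol_def by blast
      have m: "\<And>h. \<alpha> h t * (a * s (g - h) t + b * s' (g - h) t)
             = a * (\<alpha> h t * s (g - h) t) + b * (\<alpha> h t * s' (g - h) t)"
        by (simp add: distrib_left mult.left_commute)
      have "(\<Sum>h\<in>{h. \<alpha> h \<noteq> (\<lambda>_. 0)}. \<alpha> h t * (a * s (g - h) t + b * s' (g - h) t))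
         = (\<Sum>h\<in>{h. \<alpha> h \<noteq> (\<lambda>_. 0)}. a * (\<alpha> h t * s (g - h) t) + b * (\<alpha> h t * s' (g - h) t))"
        by (rule sum.cong) (rule refl, rule m)
      also have "\<dots> = a * (\<Sum>h\<in>{h. \<alpha> h \<noteq> (\<lambda>_. 0)}. \<alpha> h t * s (g - h) t)
                     + b * (\<Sum>h\<in>{h. \<alpha> h \<noteq> (\<lambda>_. 0)}. \<alpha> h t * s' (g - h) t)"
        by (simp only: sum.distrib sum_distrib_left)
      finally show "a * s g (Suc t) + b * s' g (Suc t) =
        (\<Sum>h\<in>{h. \<alpha> h \<noteq> (\<lambda>_. 0)}. \<alpha> h t * (a * s (g - h) t + b * s' (g - h) t))"
        by (simp only: e1 e2)
    qed
    ultimately show "(\<lambda>g t. a * s g t + b * s' g t) \<in> Sol_c \<alpha> (Lc k \<alpha>)"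
      unfolding Sol_c_eq fin_sols_def by simp
  qed
next
  show "\<forall>s\<in>Sol_c \<alpha> (Lc k \<alpha>). \<forall>h. act_fun s h \<in> Sol_c \<alpha> (Lc k \<alpha>) \<and>
          fourier (act_fun s h) = act_fourier (fourier s) h"
  proof (intro ballI allI conjI)
    fix s h assume s: "s \<in> Sol_c \<alpha> (Lc k \<alpha>)"
    show "fourier (act_fun s h) = act_fourier (fourier s) h"
      unfolding fourier_def act_fourier_def act_fun_def by simp
    have "\<And>t. fin_supp (\<lambda>g. act_fun s h g t)"
      using s fin_supp_act[of "\<lambda>g. s g _" h] unfolding Sol_c_eq fin_sols_def
      by (simp add: act_fun_def)
    moreover have "is_sol \<alpha> (act_fun s h)"
      unfolding is_sol_def act_fun_def
    proof (intro allI)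
      fix g t
      have c: "\<And>h'. g - h - h' = g - h' - h" by (simp add: diff_diff_eq add.commute)
      have "s (g - h) (Suc t) = (\<Sum>h'\<in>{h. \<alpha> h \<noteq> (\<lambda>_. 0)}. \<alpha> h' t * s (g - h - h') t)"
        using s unfolding Sol_c_eq fin_sols_def is_sol_def by blast
      also have "\<dots> = (\<Sum>h'\<in>{h. \<alpha> h \<noteq> (\<lambda>_. 0)}. \<alpha> h' t * s (g - h' - h) t)"
        by (simp only: c)
      finally show "s (g - h) (Suc t) = (\<Sum>h'\<in>{h. \<alpha> h \<noteq> (\<lambda>_. 0)}. \<alpha> h' t * s (g - h' - h) t)" .
    qed
    ultimately show "act_fun s h \<in> Sol_c \<alpha> (Lc k \<alpha>)"
      unfolding Sol_c_eq fin_sols_def by simp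
  qed
next
  show "\<forall>P\<in>target \<alpha>. \<forall>h. act_fourier P h \<in> target \<alpha>"
  proof (intro ballI allI)
    fix P h assume "P \<in> target \<alpha>"
    then obtain p where P: "P = (\<lambda>t. fconv (alpha_prod \<alpha> t) p)" and p: "fin_supp p"
      unfolding target_def by blast
    have "act_fourier P h = (\<lambda>t. fconv (alpha_prod \<alpha> t) (act_fun p h))"
      unfolding P act_fourier_def by (simp only: fconv_act)
    moreover have "(\<lambda>t. fconv (alpha_prod \<alpha> t) (act_fun p h)) \<in> target \<alpha>"
      unfolding target_def using fin_supp_act[OF p] by (intro CollectI exI conjI) (rule refl)
    ultimately show "act_fourier P h \<in> target \<alpha>" by simp
  qed
next
  show "bij_betw fourier (Sol_c \<alpha> (Lc k \<alpha>)) (target \<alpha>)"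
    unfolding bij_betw_def
  proof
    show "inj_on fourier (Sol_c \<alpha> (Lc k \<alpha>))"
    proof (rule inj_onI)
      fix x y :: "'g \<Rightarrow> cseq" assume "fourier x = fourier y"
      then have "x g t = y g t" for g t
        using fun_cong[OF fun_cong[OF \<open>fourier x = fourier y\<close>, of t], of g]
        by (simp add: fourier_def)
      then show "x = y" by (intro ext)
    qed
    show "fourier ` Sol_c \<alpha> (Lc k \<alpha>) = target \<alpha>"
    proof
      show "fourier ` Sol_c \<alpha> (Lc k \<alpha>) \<subseteq> target \<alpha>"
      proof
        fix P assume "P \<in> fourier ` Sol_c \<alpha> (Lc k \<alpha>)"
        then obtain s where s: "s \<in> fin_sols \<alpha>" and P: "P = fourier s"
          unfolding Sol_c_eq by auto
        have sol: "is_sol \<alpha> s" using s unfolding fin_sols_def by blast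
        have "P = (\<lambda>t. fconv (alpha_prod \<alpha> t) (fourier s 0))"
          unfolding P by (rule ext) (rule sol_fourier[OF alpha_fin sol])
        moreover have "fin_supp (fourier s 0)"
          using s unfolding fin_sols_def fourier_def by auto
        ultimately show "P \<in> target \<alpha>" unfolding target_def
          by (intro CollectI exI[of _ "fourier s 0"] conjI)
      qed
    next
      show "target \<alpha> \<subseteq> fourier ` Sol_c \<alpha> (Lc k \<alpha>)"
      proof
        fix P assume "P \<in> target \<alpha>"
        then obtain p where P: "P = (\<lambda>t. fconv (alpha_prod \<alpha> t) p)" and p: "fin_supp p"
          unfolding target_def by blast
        have "P = fourier (\<lambda>g t. fconv (alpha_prod \<alpha> t) p g)"
          unfolding P fourier_def by simp
        then show "P \<in> fourier ` Sol_c \<alpha> (Lc k \<alpha>)"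
          unfolding Sol_c_eq by (rule image_eqI[OF _ target_sol[OF alpha_fin p]])
      qed
    qed
  qed
qed

end
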